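(* Let $G=(V=V_0\uplus V_1,v_{\mathsf{init}},E,\gamma)$ be a quantitative graph game, let $\mu>0$ be the maximum of the absolute values of the costs along transitions, and let $d=\frac pq>1$ be the discount factor with $p,q$ positive integers. Under the bit-cost model, for all $(v,w)\in E$ and all $k>0$, the cost of computing $\mathsf{cost}_k(v,w)$ in the $k$-th iteration (given the values $\mathit{wt}_{k-1}$ of the previous iteration) is $O(k\cdot\log p\cdot\max\{\log\mu,\log p\})$.
   Context: A quantitative graph game $G=(V=V_0\uplus V_1, v_{\mathsf{init}},E,\gamma)$ consists of a finite directed graph $(V,E)$ in which every state has at least one outgoing edge, a partition of $V$ into $V_0$ (maximizing player) and $V_1$ (minimizing player), an initial state, and an integer cost function $\gamma:E\to\mathbb{Z}$. Value iteration defines $\mathit{wt}_1(v)=\max\{\gamma(v,w):(v,w)\in E\}$ for $v\in V_0$ ($\min$ for $v\in V_1$) and $\mathit{wt}_{k+1}(v)=\max\{\gamma(v,w)+\frac1d\mathit{wt}_k(w):(v,w)\in E\}$ for $v\in V_0$ ($\min$ for $v\in V_1$). The transition costs are $\mathsf{cost}_1(v,w)=\gamma(v,w)$ and $\mathsf{cost}_k(v,w)=\gamma(v,w)+\frac1d\mathit{wt}_{k-1}(w)$ for $k>1$. In the bit-cost model, integers are represented in binary, a rational $r/s$ by the pair of binary representations of $r$ and $s$, and adding (resp. multiplying) integers of bit-lengths $n$ and $m$ costs $O(n+m)$ (resp. $O(n\cdot m)$). *)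

theory Defs
  imports Complex_Main
begin

definition game :: "nat set \<Rightarrow> nat set \<Rightarrow> nat \<Rightarrow> (nat \<times> nat) set \<Rightarrow> (nat \<times> nat \<Rightarrow> int) \<Rightarrow> bool" where
  "game V V0 vinit E \<gamma> \<longleftrightarrow> finite V \<and> V0 \<subseteq> V \<and> vinit \<in> V \<and> E \<subseteq> V \<times> V
     \<and> (\<forall>v\<in>V. \<exists>w. (v, w) \<in> E)"

definition mu :: "(nat \<times> nat) set \<Rightarrow> (nat \<times> nat \<Rightarrow> int) \<Rightarrow> int" where
  "mu E \<gamma> = Max ((\<lambda>e. \<bar>\<gamma> e\<bar>) ` E)"

definition opt :: "nat set \<Rightarrow> nat \<Rightarrow> rat set \<Rightarrow> rat" where
  "opt V0 v S = (if v \<in> V0 then Max S else Min S)"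

text \<open>Value iteration: wt k, for k \<ge> 1 (wt 0 is an unused dummy).\<close>
fun wt :: "nat set \<Rightarrow> (nat \<times> nat) set \<Rightarrow> (nat \<times> nat \<Rightarrow> int) \<Rightarrow> rat \<Rightarrow> nat \<Rightarrow> nat \<Rightarrow> rat" where
  "wt V0 E \<gamma> d 0 v = 0"
| "wt V0 E \<gamma> d (Suc 0) v = opt V0 v {of_int (\<gamma> (v, w)) | w. (v, w) \<in> E}"
| "wt V0 E \<gamma> d (Suc (Suc k)) v =
     opt V0 v {of_int (\<gamma> (v, w)) + wt V0 E \<gamma> d (Suc k) w / d | w. (v, w) \<in> E}"

fun costk :: "nat set \<Rightarrow> (nat \<times> nat) set \<Rightarrow> (nat \<times> nat \<Rightarrow> int) \<Rightarrow> rat \<Rightarrow> nat \<Rightarrow> nat \<Rightarrow> nat \<Rightarrow> rat" where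
  "costk V0 E \<gamma> d 0 v w = 0"
| "costk V0 E \<gamma> d (Suc 0) v w = of_int (\<gamma> (v, w))"
| "costk V0 E \<gamma> d (Suc (Suc k)) v w = of_int (\<gamma> (v, w)) + wt V0 E \<gamma> d (Suc k) w / d"

fun bitlen_nat :: "nat \<Rightarrow> nat" where
  "bitlen_nat n = (if n < 2 then 1 else 1 + bitlen_nat (n div 2))"

definition bitlen :: "int \<Rightarrow> nat" where
  "bitlen n = bitlen_nat (nat \<bar>n\<bar>)"

text \<open>Cost of adding / multiplying integers: O(n+m) / O(n*m), with constant 1.\<close>
definition add_cost :: "int \<Rightarrow> int \<Rightarrow> nat" where
  "add_cost a b = bitlen a + bitlen b"

definition mul_cost :: "int \<Rightarrow> int \<Rightarrow> nat" where
  "mul_cost a b = bitlen a * bitlen b"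

text \<open>Computation of cost k (v,w) with d = p/q, given the value wt (k-1) w represented
  as the rational N / p^(k-2) (the representation produced by value iteration).
  Returns (numerator, denominator, bit cost).\<close>
definition cost_step :: "(nat \<times> nat \<Rightarrow> int) \<Rightarrow> nat \<Rightarrow> nat \<Rightarrow> nat \<Rightarrow> nat \<Rightarrow> nat \<Rightarrow> int
    \<Rightarrow> int \<times> int \<times> nat" where
  "cost_step \<gamma> p q k v w N =
    (if k \<le> 1 then (\<gamma> (v, w), 1, bitlen (\<gamma> (v, w)))
     else
       (let D = int p ^ (k - 2);
            s = int p * D;
            a = \<gamma> (v, w) * s;
            b = int q * N;
            r = a + b
        in (r, s, mul_cost (int p) D + mul_cost (\<gamma> (v, w)) s + mul_cost (int q) N + add_cost a b)))"

end

theory Submission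
  imports Defs
begin

declare bitlen_nat.simps[simp del]

lemma bitlen_pos: "1 \<le> bitlen_nat n"
  by (subst bitlen_nat.simps) simp

lemma bitlen_upper: "n < 2 ^ bitlen_nat n"
proof (induction n rule: bitlen_nat.induct)
  case (1 n)
  show ?case
  proof (cases "n < 2")
    case True then show ?thesis by (subst bitlen_nat.simps) simp
  next
    case False
    then have "bitlen_nat n = 1 + bitlen_nat (n div 2)" by (subst bitlen_nat.simps) simp
    with 1 False show ?thesis by simp
  qed
qed

lemma bitlen_lower: "1 \<le> n \<Longrightarrow> 2 ^ (bitlen_nat n - 1) \<le> n"
proof (induction n rule: bitlen_nat.induct)
  case (1 n)
  show ?case
  proof (cases "n < 2")
    case True then show ?thesis using 1 by (subst bitlen_nat.simps) simp
  next
    case False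
    then have e: "bitlen_nat n = 1 + bitlen_nat (n div 2)" by (subst bitlen_nat.simps) simp
    have "2 ^ (bitlen_nat (n div 2) - 1) \<le> n div 2" using 1 False by simp
    then have "2 * 2 ^ (bitlen_nat (n div 2) - 1) \<le> n" by linarith
    moreover have "2 * 2 ^ (bitlen_nat (n div 2) - 1) = (2::nat) ^ (bitlen_nat n - 1)"
      using e bitlen_pos[of "n div 2"] by (metis add_diff_cancel_left' power_Suc Suc_diff_1 less_le_trans zero_less_one plus_1_eq_Suc)
    ultimately show ?thesis by simp
  qed
qed

lemma bitlen_le: "n < 2 ^ b \<Longrightarrow> 1 \<le> b \<Longrightarrow> bitlen_nat n \<le> b"
proof (induction n arbitrary: b rule: bitlen_nat.induct)
  case (1 n)
  show ?case
  proof (cases "n < 2")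
    case True then show ?thesis using 1 by (subst bitlen_nat.simps) simp
  next
    case False
    then have e: "bitlen_nat n = 1 + bitlen_nat (n div 2)" by (subst bitlen_nat.simps) simp
    have "b \<noteq> 1" using 1 False by auto
    then have b2: "2 \<le> b" using 1 by simp
    have "n div 2 < 2 ^ (b - 1)" using 1(2) b2
      by (metis One_nat_def Suc_diff_1 less_le_trans less_mult_imp_div_less mult.commute pos2 power_Suc)
    then have "bitlen_nat (n div 2) \<le> b - 1" using 1 False b2 by simp
    then show ?thesis using e b2 by simp
  qed
qed

lemma bitlen_int_le: "\<bar>x\<bar> < 2 ^ b \<Longrightarrow> 1 \<le> b \<Longrightarrow> bitlen x \<le> b"
  unfolding bitlen_def
  by (rule bitlen_le) (simp_all add: nat_less_iff)

lemma bitlen_log: "1 \<le> n \<Longrightarrow> real (bitlen_nat n) \<le> 1 + log 2 (real n)"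
proof -
  assume n: "1 \<le> n"
  have "real (bitlen_nat n - 1) \<le> log 2 (real n)"
    by (rule le_log2_of_power) (rule bitlen_lower[OF n])
  then show ?thesis using bitlen_pos[of n] by simp
qed


lemma game_finE: "game V V0 vinit E \<gamma> \<Longrightarrow> finite E"
  unfolding game_def by (meson finite_SigmaI finite_subset)

lemma gamma_le_mu: "game V V0 vinit E \<gamma> \<Longrightarrow> (v, w) \<in> E \<Longrightarrow> \<bar>\<gamma> (v, w)\<bar> \<le> mu E \<gamma>"
  unfolding mu_def using game_finE by (intro Max_ge) auto

lemma opt_attained:
  assumes g: "game V V0 vinit E \<gamma>" and v: "v \<in> V"
  shows "\<exists>w. (v, w) \<in> E \<and> opt V0 v {f w | w. (v, w) \<in> E} = f w"
proof -
  have eq: "{f w | w. (v, w) \<in> E} = f ` {w. (v, w) \<in> E}" by auto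
  have "{w. (v, w) \<in> E} \<subseteq> snd ` E" by force
  then have fin: "finite (f ` {w. (v, w) \<in> E})" using game_finE[OF g] by (meson finite_imageI finite_subset)
  have ne: "f ` {w. (v, w) \<in> E} \<noteq> {}" using g v unfolding game_def by auto
  have "opt V0 v (f ` {w. (v, w) \<in> E}) \<in> f ` {w. (v, w) \<in> E}"
    unfolding opt_def using Max_in[OF fin ne] Min_in[OF fin ne] by simp
  then show ?thesis unfolding eq by auto
qed

lemma wt_int:
  assumes g: "game V V0 vinit E \<gamma>" and p: "0 < p" and q: "0 < q"
  shows "v \<in> V \<Longrightarrow> \<exists>N::int. wt V0 E \<gamma> (of_nat p / of_nat q) (Suc j) v = of_int N / of_nat p ^ j"
proof (induction j arbitrary: v)
  case 0
  obtain w where "(v, w) \<in> E" and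
    "opt V0 v {(\<lambda>w. of_int (\<gamma> (v, w))) w | w. (v, w) \<in> E} = of_int (\<gamma> (v, w))"
    using opt_attained[OF g 0, of "\<lambda>w. of_int (\<gamma> (v, w))"] by auto
  then show ?case by auto
next
  case (Suc j)
  obtain w where w: "(v, w) \<in> E" and
    e: "opt V0 v {(\<lambda>w. of_int (\<gamma> (v, w)) + wt V0 E \<gamma> (of_nat p / of_nat q) (Suc j) w / (of_nat p / of_nat q)) w | w. (v, w) \<in> E}
       = of_int (\<gamma> (v, w)) + wt V0 E \<gamma> (of_nat p / of_nat q) (Suc j) w / (of_nat p / of_nat q)"
    using opt_attained[OF g Suc.prems, of "\<lambda>w. of_int (\<gamma> (v, w)) + wt V0 E \<gamma> (of_nat p / of_nat q) (Suc j) w / (of_nat p / of_nat q)"] by auto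
  have "w \<in> V" using w g unfolding game_def by auto
  then obtain N where N: "wt V0 E \<gamma> (of_nat p / of_nat q) (Suc j) w = of_int N / of_nat p ^ j"
    using Suc.IH by blast
  have "wt V0 E \<gamma> (of_nat p / of_nat q) (Suc (Suc j)) v
     = of_int (\<gamma> (v, w) * int p ^ Suc j + int q * N) / of_nat p ^ Suc j"
    using e N p q by (simp add: field_simps)
  then show ?case by blast
qed

lemma wt_bound:
  assumes g: "game V V0 vinit E \<gamma>" and d: "1 < d"
  shows "v \<in> V \<Longrightarrow> \<bar>wt V0 E \<gamma> d (Suc j) v\<bar> \<le> of_int (mu E \<gamma>) * of_nat (Suc j)"
proof (induction j arbitrary: v)
  case 0
  obtain w where w: "(v, w) \<in> E" and
    e: "opt V0 v {(\<lambda>w. of_int (\<gamma> (v, w))) w | w. (v, w) \<in> E} = of_int (\<gamma> (v, w))"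
    using opt_attained[OF g 0, of "\<lambda>w. of_int (\<gamma> (v, w))"] by auto
  have ga: "\<bar>of_int (\<gamma> (v, w))\<bar> \<le> (of_int (mu E \<gamma>) :: rat)"
    using gamma_le_mu[OF g w] by (simp only: of_int_abs[symmetric] of_int_le_iff)
  have "wt V0 E \<gamma> d (Suc 0) v = of_int (\<gamma> (v, w))" using e by simp
  then show ?case using ga by simp
next
  case (Suc j)
  obtain w where w: "(v, w) \<in> E" and
    e: "opt V0 v {(\<lambda>w. of_int (\<gamma> (v, w)) + wt V0 E \<gamma> d (Suc j) w / d) w | w. (v, w) \<in> E}
       = of_int (\<gamma> (v, w)) + wt V0 E \<gamma> d (Suc j) w / d"
    using opt_attained[OF g Suc.prems, of "\<lambda>w. of_int (\<gamma> (v, w)) + wt V0 E \<gamma> d (Suc j) w / d"] by auto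
  have "w \<in> V" using w g unfolding game_def by auto
  then have IH: "\<bar>wt V0 E \<gamma> d (Suc j) w\<bar> \<le> of_int (mu E \<gamma>) * of_nat (Suc j)" using Suc.IH by blast
  have ga: "\<bar>of_int (\<gamma> (v, w))\<bar> \<le> (of_int (mu E \<gamma>) :: rat)"
    using gamma_le_mu[OF g w] by (simp only: of_int_abs[symmetric] of_int_le_iff)
  have "\<bar>wt V0 E \<gamma> d (Suc j) w / d\<bar> \<le> \<bar>wt V0 E \<gamma> d (Suc j) w\<bar>"
    using d by (simp add: abs_divide divide_le_eq mult_le_cancel_left1)
  then have "\<bar>of_int (\<gamma> (v, w)) + wt V0 E \<gamma> d (Suc j) w / d\<bar> \<le> of_int (mu E \<gamma>) * of_nat (Suc (Suc j))"
    using ga IH abs_triangle_ineq[of "of_int (\<gamma> (v, w))" "wt V0 E \<gamma> d (Suc j) w / d"]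
    by (simp add: algebra_simps)
  then show ?case using e by simp
qed


lemma arith_bound:
  fixes bp bm j :: nat
  assumes "1 \<le> bp"
  defines "B \<equiv> max bm bp" and "X \<equiv> bm + Suc j + bp * Suc j"
  shows "bp * (bp * Suc j) + bm * (bp * Suc j) + bp * X + (bm + bp * Suc j + (bp + X))
         \<le> 11 * (bp * B * Suc (Suc j))"
proof -
  let ?k = "Suc (Suc j)"
  have B1: "bp \<le> B" "bm \<le> B" "1 \<le> B" using assms by auto
  have k: "Suc j \<le> ?k" "1 \<le> ?k" by auto
  have BK1: "B \<le> B * ?k" by simp
  have BK2: "?k \<le> B * ?k" using mult_le_mono1[OF B1(3), of ?k] by simp
  have BK3: "bp * Suc j \<le> B * ?k" using mult_le_mono[OF B1(1) k(1)] .
  have BK4: "bm * Suc j \<le> B * ?k" using mult_le_mono[OF B1(2) k(1)] .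
  have t1: "bp * (bp * Suc j) \<le> bp * B * ?k"
    unfolding mult.assoc[of bp B] by (rule mult_le_mono2[OF BK3])
  have t2: "bm * (bp * Suc j) \<le> bp * B * ?k"
  proof -
    have "bm * (bp * Suc j) = bp * (bm * Suc j)" by (simp only: ac_simps)
    also have "\<dots> \<le> bp * (B * ?k)" by (rule mult_le_mono2[OF BK4])
    finally show ?thesis by (simp only: ac_simps)
  qed
  have X: "X \<le> 3 * (B * ?k)" unfolding X_def using BK1 BK2 BK3 B1 by linarith
  have bX: "bp * X \<le> 3 * (bp * B * ?k)"
  proof -
    have "bp * X \<le> bp * (3 * (B * ?k))" by (rule mult_le_mono2[OF X])
    then show ?thesis by (simp only: ac_simps)
  qed
  have BK5: "1 \<le> B * ?k" using BK1 B1 by linarith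
  have P1: "B * ?k \<le> bp * B * ?k" using mult_le_mono1[OF assms(1), of "B * ?k"]
    by (simp only: ac_simps mult_1)
  have P2: "bp \<le> bp * B * ?k" using mult_le_mono2[OF BK5, of bp]
    by (simp only: ac_simps mult_1_right)
  have "bm + bp * Suc j + (bp + X) \<le> B * ?k + B * ?k + bp * B * ?k + 3 * (B * ?k)"
    using BK1 BK3 B1 X P2 by linarith
  then show ?thesis using t1 t2 bX P1 by linarith
qed

lemma bitlen_int_p: "bitlen (int p) = bitlen_nat p" unfolding bitlen_def by simp

theorem lemma5:
  shows "\<exists>C::real. C > 0 \<and>
    (\<forall>V V0 vinit E \<gamma> (p::nat) (q::nat) v w (k::nat).
      game V V0 vinit E \<gamma> \<and> mu E \<gamma> > 0 \<and> 0 < q \<and> q < p \<and> (v, w) \<in> E \<and> 0 < k \<longrightarrow>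
      (\<exists>N::int.
         (2 \<le> k \<longrightarrow> of_int N = wt V0 E \<gamma> (of_nat p / of_nat q) (k - 1) w * of_nat p ^ (k - 2)) \<and>
         (case cost_step \<gamma> p q k v w N of (r, s, c) \<Rightarrow>
            of_int r / of_int s = costk V0 E \<gamma> (of_nat p / of_nat q) k v w \<and>
            real c \<le> C * real k * log 2 (real p) * max (log 2 (real_of_int (mu E \<gamma>))) (log 2 (real p)))))"
proof (rule exI[of _ "50::real"], intro conjI allI impI)
  show "(0::real) < 50" by simp
  fix V V0 :: "nat set" and vinit :: nat and E :: "(nat \<times> nat) set" and \<gamma> :: "nat \<times> nat \<Rightarrow> int" and p q v w k :: nat
  assume H: "game V V0 vinit E \<gamma> \<and> mu E \<gamma> > 0 \<and> 0 < q \<and> q < p \<and> (v, w) \<in> E \<and> 0 < k"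
  then have g: "game V V0 vinit E \<gamma>" and mu0: "mu E \<gamma> > 0" and q: "0 < q" and qp: "q < p"
    and vw: "(v, w) \<in> E" and k0: "0 < k" by auto
  define \<mu> where "\<mu> = mu E \<gamma>"
  define L where "L = log 2 (real p)"
  define M where "M = max (log 2 (real_of_int \<mu>)) L"
  define bp where "bp = bitlen_nat p"
  define bm where "bm = bitlen_nat (nat \<mu>)"
  have p2: "2 \<le> p" using q qp by linarith
  have L1: "1 \<le> L"
  proof -
    have "2 ^ 1 \<le> p" using p2 by simp
    then have "real 1 \<le> log 2 (real p)" by (rule le_log2_of_power)
    then show ?thesis unfolding L_def by simp
  qed
  have LM: "L \<le> M" unfolding M_def by (rule max.cobounded2)
  have bp1: "1 \<le> bp" unfolding bp_def by (rule bitlen_pos)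
  have bpL: "real bp \<le> 2 * L"
    using bitlen_log[of p] p2 L1 unfolding bp_def L_def by linarith
  have bmM: "real bm \<le> 2 * M"
  proof -
    have "real bm \<le> 1 + log 2 (real (nat \<mu>))" unfolding bm_def
      by (rule bitlen_log) (use mu0 \<mu>_def in simp)
    also have "real (nat \<mu>) = real_of_int \<mu>" using mu0 \<mu>_def by simp
    finally show ?thesis using L1 unfolding M_def by linarith
  qed
  have bpM: "real bp \<le> 2 * M" using bpL LM by linarith
  have ga: "\<bar>\<gamma> (v, w)\<bar> \<le> \<mu>" using gamma_le_mu[OF g vw] \<mu>_def by simp
  have mu_lt: "\<mu> < 2 ^ bm"
  proof -
    have "nat \<mu> < 2 ^ bm" unfolding bm_def by (rule bitlen_upper)
    then have "int (nat \<mu>) < int (2 ^ bm)" by linarith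
    then show ?thesis using mu0 \<mu>_def by simp
  qed
  have p_lt: "int p < 2 ^ bp"
  proof -
    have "p < 2 ^ bp" unfolding bp_def by (rule bitlen_upper)
    then have "int p < int (2 ^ bp)" by linarith
    then show ?thesis by simp
  qed
  have bga: "bitlen (\<gamma> (v, w)) \<le> bm"
    by (rule bitlen_int_le) (use ga mu_lt bm_def bitlen_pos in auto)
  show "\<exists>N::int.
         (2 \<le> k \<longrightarrow> of_int N = wt V0 E \<gamma> (of_nat p / of_nat q) (k - 1) w * of_nat p ^ (k - 2)) \<and>
         (case cost_step \<gamma> p q k v w N of (r, s, c) \<Rightarrow>
            of_int r / of_int s = costk V0 E \<gamma> (of_nat p / of_nat q) k v w \<and>
            real c \<le> 50 * real k * log 2 (real p) * max (log 2 (real_of_int (mu E \<gamma>))) (log 2 (real p)))"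
  proof (cases "k = 1")
    case True
    have "real (bitlen (\<gamma> (v, w))) \<le> 50 * real k * L * M"
    proof -
      have "real (bitlen (\<gamma> (v, w))) \<le> 2 * M" using bga bmM by linarith
      also have "\<dots> \<le> 50 * M" using L1 LM by linarith
      also have "\<dots> \<le> 50 * L * M" using L1 LM by (simp add: mult_le_cancel_right1)
      finally show ?thesis using True by simp
    qed
    then show ?thesis using True
      by (intro exI[of _ 0]) (simp add: cost_step_def L_def M_def \<mu>_def)
  next
    case False
    then obtain j where kj: "k = Suc (Suc j)" using k0 by (metis One_nat_def Suc_pred' less_numeral_extra(3) not0_implies_Suc)
    have wV: "w \<in> V" using g vw unfolding game_def by auto
    have p0: "0 < p" using p2 by simp
    obtain N where N: "wt V0 E \<gamma> (of_nat p / of_nat q) (Suc j) w = of_int N / of_nat p ^ j"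
      using wt_int[OF g p0 q wV] by blast
    have d1: "1 < (of_nat p / of_nat q :: rat)" using q qp by simp
    have wb: "\<bar>wt V0 E \<gamma> (of_nat p / of_nat q) (Suc j) w\<bar> \<le> of_int \<mu> * of_nat (Suc j)"
      using wt_bound[OF g d1 wV] \<mu>_def by simp
    have pj: "(of_nat p :: rat) ^ j > 0" using p0 by simp
    have Neq: "of_int N = wt V0 E \<gamma> (of_nat p / of_nat q) (Suc j) w * of_nat p ^ j"
      using N pj by simp
    have Nb: "\<bar>N\<bar> \<le> \<mu> * int (Suc j) * int p ^ j"
    proof -
      have "(of_int \<bar>N\<bar> :: rat) = \<bar>wt V0 E \<gamma> (of_nat p / of_nat q) (Suc j) w\<bar> * of_nat p ^ j"
        using Neq pj by (simp add: abs_mult)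
      also have "\<dots> \<le> of_int \<mu> * of_nat (Suc j) * of_nat p ^ j"
        using wb pj by (simp add: mult_right_mono)
      also have "\<dots> = of_int (\<mu> * int (Suc j) * int p ^ j)" by simp
      finally show ?thesis by (simp only: of_int_le_iff)
    qed
    define Y where "Y = bp * Suc j"
    define X where "X = bm + Suc j + Y"
    have Y1: "1 \<le> Y" unfolding Y_def using bp1 by simp
    have pow: "(2::int) ^ Y = (2 ^ bp) ^ Suc j" unfolding Y_def by (rule power_mult)
    have ps: "int p * int p ^ j < 2 ^ Y"
    proof -
      have "int p ^ Suc j < (2 ^ bp) ^ Suc j"
        by (rule power_strict_mono[OF p_lt]) auto
      then show ?thesis using pow by simp
    qed
    have pjlt: "int p ^ j < 2 ^ Y"
    proof -
      have "int p ^ j \<le> int p * int p ^ j" using p0 by simp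
      then show ?thesis using ps by linarith
    qed
    have mu1: "0 < \<mu>" using mu0 \<mu>_def by simp
    have gs: "\<bar>\<gamma> (v, w) * (int p * int p ^ j)\<bar> < 2 ^ (bm + Y)"
    proof -
      have "\<bar>\<gamma> (v, w) * (int p * int p ^ j)\<bar> = \<bar>\<gamma> (v, w)\<bar> * (int p * int p ^ j)"
        by (simp add: abs_mult)
      also have "\<dots> \<le> \<mu> * (int p * int p ^ j)" using ga by (simp add: mult_right_mono)
      also have "\<dots> < 2 ^ bm * 2 ^ Y"
        by (rule mult_strict_mono[OF mu_lt ps]) auto
      finally show ?thesis by (simp add: power_add)
    qed
    have NX: "\<bar>N\<bar> < 2 ^ X"
    proof -
      have a: "int (Suc j) < 2 ^ Suc j"
      proof -
        have "Suc j < 2 ^ Suc j" by (rule less_exp)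
        then have "int (Suc j) < int (2 ^ Suc j)" by linarith
        then show ?thesis by simp
      qed
      have "\<mu> * int (Suc j) < 2 ^ bm * 2 ^ Suc j"
        by (rule mult_strict_mono[OF mu_lt a]) auto
      then have "\<mu> * int (Suc j) * int p ^ j < 2 ^ bm * 2 ^ Suc j * 2 ^ Y"
        by (rule mult_strict_mono[OF _ pjlt]) auto
      then show ?thesis using Nb unfolding X_def by (simp add: power_add)
    qed
    have qN: "\<bar>int q * N\<bar> < 2 ^ (bp + X)"
    proof -
      have qlt: "int q < 2 ^ bp" using qp p_lt by linarith
      have "\<bar>int q * N\<bar> = int q * \<bar>N\<bar>" by (simp add: abs_mult)
      also have "\<dots> < 2 ^ bp * 2 ^ X"
        by (rule mult_strict_mono[OF qlt NX]) auto
      finally show ?thesis by (simp add: power_add)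
    qed
    have X1: "1 \<le> X" unfolding X_def by simp
    have c1: "bitlen (int p) \<le> bp" using bitlen_int_p bp_def by simp
    have c2: "bitlen (int p ^ j) \<le> Y" by (rule bitlen_int_le) (use pjlt Y1 in simp_all)
    have c3: "bitlen (int p * int p ^ j) \<le> Y" by (rule bitlen_int_le) (use ps Y1 in simp_all)
    have c4: "bitlen (int q) \<le> bp"
      by (rule bitlen_int_le) (use qp p_lt bp1 in simp_all)
    have c5: "bitlen N \<le> X" by (rule bitlen_int_le) (use NX X1 in simp_all)
    have c6: "bitlen (\<gamma> (v, w) * (int p * int p ^ j)) \<le> bm + Y"
      by (rule bitlen_int_le) (use gs Y1 in simp_all)
    have c7: "bitlen (int q * N) \<le> bp + X"
      by (rule bitlen_int_le) (use qN X1 in simp_all)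
    define c where "c = mul_cost (int p) (int p ^ j) + mul_cost (\<gamma> (v, w)) (int p * int p ^ j)
       + mul_cost (int q) N + add_cost (\<gamma> (v, w) * (int p * int p ^ j)) (int q * N)"
    have cs: "cost_step \<gamma> p q k v w N = (\<gamma> (v, w) * (int p * int p ^ j) + int q * N, int p * int p ^ j, c)"
      unfolding cost_step_def kj c_def by (simp add: Let_def)
    have cle: "c \<le> bp * Y + bm * Y + bp * X + (bm + Y + (bp + X))"
    proof -
      have "mul_cost (int p) (int p ^ j) \<le> bp * Y" unfolding mul_cost_def by (rule mult_le_mono[OF c1 c2])
      moreover have "mul_cost (\<gamma> (v, w)) (int p * int p ^ j) \<le> bm * Y"
        unfolding mul_cost_def by (rule mult_le_mono[OF bga c3])
      moreover have "mul_cost (int q) N \<le> bp * X" unfolding mul_cost_def by (rule mult_le_mono[OF c4 c5])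
      moreover have "add_cost (\<gamma> (v, w) * (int p * int p ^ j)) (int q * N) \<le> bm + Y + (bp + X)"
        unfolding add_cost_def using c6 c7 by linarith
      ultimately show ?thesis unfolding c_def by linarith
    qed
    define B where "B = max bm bp"
    have ab: "bp * Y + bm * Y + bp * X + (bm + Y + (bp + X)) \<le> 11 * (bp * B * k)"
      using arith_bound[OF bp1, where bm=bm and j=j] unfolding B_def X_def Y_def kj .
    have c11: "c \<le> 11 * (bp * B * k)" using cle ab by (rule order.trans)
    have BM: "real B \<le> 2 * M" unfolding B_def using bmM bpM by simp
    have M1: "1 \<le> M" using L1 LM by linarith
    have "real c \<le> 11 * (real bp * real B * real k)" using c11
      by (metis of_nat_le_iff of_nat_mult of_nat_numeral)
    also have "\<dots> \<le> 11 * ((2 * L) * (2 * M) * real k)"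
    proof -
      have "real bp * real B \<le> (2 * L) * (2 * M)"
        by (rule mult_mono[OF bpL BM]) (use L1 in simp_all)
      then have "real bp * real B * real k \<le> (2 * L) * (2 * M) * real k"
        by (rule mult_right_mono) simp
      then show ?thesis by (simp only: mult_le_cancel_left_pos ac_simps)
    qed
    also have "\<dots> \<le> 50 * real k * L * M"
    proof -
      have "0 \<le> real k * L * M" using L1 M1 by simp
      then show ?thesis by (simp add: algebra_simps)
    qed
    finally have cfin: "real c \<le> 50 * real k * L * M" .
    have ratio: "of_int (\<gamma> (v, w) * (int p * int p ^ j) + int q * N) / of_int (int p * int p ^ j)
        = costk V0 E \<gamma> (of_nat p / of_nat q) k v w"
      unfolding kj using N p0 q by (simp add: field_simps)
    have Neq': "of_int N = wt V0 E \<gamma> (of_nat p / of_nat q) (k - 1) w * of_nat p ^ (k - 2)"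
      using Neq kj by simp
    show ?thesis
      apply (rule exI[of _ N])
      unfolding cs prod.case
      using Neq' ratio cfin unfolding L_def M_def \<mu>_def by blast
  qed
qed

end
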